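(* Let $X$ be a locally compact Polish space and $B\subseteq X$ dense. Suppose $\succeq$ and $\succeq'$ are complete, continuous, and locally strict binary relations on $X$. If $\succeq\cap(B\times B)\subseteq\succeq'\cap(B\times B)$, then $\succeq=\succeq'$.
   Context: A binary relation $\succeq\subseteq X\times X$ is complete if for all $x,y$, $x\succeq y$ or $y\succeq x$; continuous if it is closed in $X\times X$; locally strict if for all $x\succeq y$ and every neighborhood $V$ of $(x,y)$ in $X\times X$ there is $(x',y')\in V$ with $x'\succ y'$, where $x'\succ y'$ means $x'\succeq y'$ and not $y'\succeq x'$. *)

theory Defs
  imports "HOL-Analysis.Analysis"
begin

text \<open>Binary relations on a topological space X (here: the universe of a type) as sets of pairs.\<close>

definition complete_rel :: "('a \<times> 'a) set \<Rightarrow> bool" where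
  "complete_rel R \<longleftrightarrow> (\<forall>x y. (x, y) \<in> R \<or> (y, x) \<in> R)"

definition strict_part :: "('a \<times> 'a) set \<Rightarrow> ('a \<times> 'a) set" where
  "strict_part R = {(x, y). (x, y) \<in> R \<and> (y, x) \<notin> R}"

definition continuous_rel :: "('a::topological_space \<times> 'a) set \<Rightarrow> bool" where
  "continuous_rel R \<longleftrightarrow> closed R"

definition locally_strict :: "('a::topological_space \<times> 'a) set \<Rightarrow> bool" where
  "locally_strict R \<longleftrightarrow>
     (\<forall>x y. (x, y) \<in> R \<longrightarrow>
        (\<forall>V. open V \<and> (x, y) \<in> V \<longrightarrow> (\<exists>p\<in>V. p \<in> strict_part R)))"

end

theory Submission
  imports Defs
begin

lemma strict_open:
  fixes R :: "('a::topological_space \<times> 'a) set"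
  assumes "complete_rel R" "closed R"
  shows "open (strict_part R)"
proof -
  have eq: "strict_part R = (\<lambda>p. (snd p, fst p)) -` (- R)"
    using assms(1) unfolding strict_part_def complete_rel_def by fastforce
  have "continuous_on UNIV (\<lambda>p::'a\<times>'a. (snd p, fst p))"
    by (intro continuous_intros)
  moreover have "open (- R)" using assms(2) by auto
  ultimately show ?thesis unfolding eq
    by (metis open_vimage)
qed

lemma sub_lemma:
  fixes R R' :: "('a::topological_space \<times> 'a) set"
  assumes ls: "locally_strict R" and opn: "open (strict_part R)"
    and dense: "closure D = UNIV" and inc: "strict_part R \<inter> D \<subseteq> R'"
    and cl: "closed R'"
  shows "R \<subseteq> R'"
proof
  fix p assume pR: "p \<in> R"
  have "p \<in> closure R'"
    unfolding closure_iff_nhds_not_empty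
  proof (intro allI impI)
    fix A S assume SA: "S \<subseteq> A" and oS: "open S" and pS: "p \<in> S"
    obtain q where "q \<in> S" "q \<in> strict_part R"
      using ls pR oS pS unfolding locally_strict_def
      by (metis prod.collapse)
    then have ne: "S \<inter> strict_part R \<noteq> {}" by auto
    have o2: "open (S \<inter> strict_part R)" using oS opn by auto
    have "(S \<inter> strict_part R) \<inter> closure D \<noteq> {}" using ne dense by auto
    then have "(S \<inter> strict_part R) \<inter> D \<noteq> {}"
      using open_Int_closure_eq_empty[OF o2] by blast
    then show "R' \<inter> A \<noteq> {}" using inc SA by blast
  qed
  then show "p \<in> R'" using cl by (simp add: closure_closed)
qed

theorem theorem12:
  fixes B :: "'a::polish_space set"
    and R R' :: "('a \<times> 'a) set"
  assumes "locally compact (UNIV :: 'a set)"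
    and "closure B = UNIV"
    and "complete_rel R" and "continuous_rel R" and "locally_strict R"
    and "complete_rel R'" and "continuous_rel R'" and "locally_strict R'"
    and "R \<inter> (B \<times> B) \<subseteq> R' \<inter> (B \<times> B)"
  shows "R = R'"
proof
  have cR: "closed R" and cR': "closed R'" using assms(4,7) unfolding continuous_rel_def by auto
  have dB: "closure (B \<times> B) = UNIV" using assms(2) by (simp add: closure_Times)
  show "R \<subseteq> R'"
  proof (rule sub_lemma[OF assms(5) strict_open[OF assms(3) cR] dB _ cR'])
    show "strict_part R \<inter> (B \<times> B) \<subseteq> R'" using assms(9) unfolding strict_part_def by auto
  qed
  note RR = this
  show "R' \<subseteq> R"
  proof (rule sub_lemma[OF assms(8) strict_open[OF assms(6) cR'] closure_UNIV _ cR])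
    show "strict_part R' \<inter> UNIV \<subseteq> R"
      using RR assms(3) unfolding strict_part_def complete_rel_def by auto
  qed
qed

end
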